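(* Let $\mathcal R$ be a CCTRS. (1) If $s,t\in\mathcal T(\mathcal F,\mathcal V)$ and $s\sqsupset t$, then $\mathrm{label}(s)\rightharpoonup_\rhd\mathrm{label}(t)$. (2) If $s,t\in\mathcal T(\mathcal G,\mathcal V)$ and $s\rightharpoonup_\rhd t$, then $\mathrm{erase}(s)\sqsupset\mathrm{erase}(t)$.
   Context: Terms are built from a signature $\mathcal F$ and variables $\mathcal V$. An (oriented) conditional rewrite rule has the form $\ell\to r\Leftarrow a_1\approx b_1,\dots,a_k\approx b_k$ with $k\ge0$; $s\to_{\mathcal R}t$ iff there are a position $p$, a rule and a substitution $\sigma$ with $s|_p=\ell\sigma$, $t=s[r\sigma]_p$ and $a_j\sigma\to_{\mathcal R}^*b_j\sigma$ for all $j$ (formally the union of the usual approximations $\to_{\mathcal R_i}$). Defined symbols are root symbols of left-hand sides, others are constructors; constructor terms contain only constructors and variables. $\mathcal R{\restriction}f$ is the set of rules whose left-hand side has root $f$. A CCTRS is a set $\mathcal R$ of rules each of the form $f(\ell_1,\dots,\ell_n)\to r\Leftarrow a_1\approx b_1,\dots,a_k\approx b_k$ where $\ell_1,\dots,\ell_n,b_1,\dots,b_k$ are constructor terms, the terms $f(\ell_1,\dots,\ell_n),b_1,\dots,b_k$ pairwise have no common variables, $\mathrm{Var}(r)\subseteq\mathrm{Var}(\ell_1,\dots,\ell_n,b_1,\dots,b_k)$ and $\mathrm{Var}(a_i)\subseteq\mathrm{Var}(\ell_1,\dots,\ell_n,b_1,\dots,b_{i-1})$. Write $s\sqsupset t$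 (for unlabeled terms) if there are a position $p$, a rule $\ell\to r\Leftarrow a_1\approx b_1,\dots,a_k\approx b_k$, a substitution $\sigma$ and $1\le i\le k$ with $s|_p=\ell\sigma$, $a_j\sigma\to^* b_j\sigma$ for $1\le j<i$, and $t=a_i\sigma$. Labeled terms: the labeled signature $\mathcal G$ consists of the constructors of $\mathcal F$ together with a symbol $f_R$ (same arity as $f$) for every defined $f$ and every $R\subseteq\mathcal R{\restriction}f$. $\mathrm{label}(t)$ replaces every defined $f$ by $f_{\mathcal R\restriction f}$; $\mathrm{erase}$ removes all labels. A labeled normal form is a term built only from constructors, symbols $f_\emptyset$, and variables. The labeled step relation $\rightharpoonup$ is defined inductively: $s\rightharpoonup t$ if either (i) there are a position $p$ and a rule $\rho\colon\ell\to r\Leftarrow c$ with $s|_p=f_R(s_1,\dots,s_n)$, $\rho\in R$, $t=s[f_{R\setminus\{\rho\}}(s_1,\dots,s_n)]_p$, and linear labeled normal forms $u_1,\dots,u_n$ on fresh variables and $\sigma$ with $s|_p=f_R(u_1,\dots,u_n)\sigma$ and $f(\mathrm{erase}(u_1),\dots,\mathrm{erase}(u_n))$ not unifiable with $\ell$; or (ii) there are $p$, a rule $\rho\colon f(\ell_1,\dots,\ell_n)\to r\Leftarrow a_1\approx b_1,\dots,a_k\approx b_k$, $\sigma$ and $0\le j\le k$ with $s|_p=f_R(\ell_1\sigma,\dots,\ell_n\sigma)$, $\rho\in R$, $\mathrm{label}(a_i)\sigma\rightharpoonup^*b_i\sigma$ for $1\le i\le j$, and either $j=k$ and $t=s[\mathrm{label}(r)\sigma]_p$,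 or $j<k$, $\mathrm{label}(a_{j+1})\sigma\rightharpoonup^*u\tau$ for some linear labeled normal form $u$ with $\mathrm{erase}(u)$ not unifiable with $b_{j+1}$ and some $\tau$, and $t=s[f_{R\setminus\{\rho\}}(\ell_1\sigma,\dots,\ell_n\sigma)]_p$. Finally $s\rightharpoonup_\rhd t$ if there are a position $p$, a rule $\rho$ as in (ii), a substitution $\sigma$ and $0\le j<k$ with $s|_p=f_R(\ell_1\sigma,\dots,\ell_n\sigma)$, $\rho\in R$, $\mathrm{label}(a_i)\sigma\rightharpoonup^*b_i\sigma$ for $1\le i\le j$, and $t=\mathrm{label}(a_{j+1})\sigma$. *)

theory Defs
  imports Main
begin

datatype ('f, 'v) "term" = Var 'v | Fun 'f "('f, 'v) term list"

fun vars_list :: "('f, 'v) term \<Rightarrow> 'v list" where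
  "vars_list (Var x) = [x]"
| "vars_list (Fun f ts) = concat (map vars_list ts)"

definition vars :: "('f, 'v) term \<Rightarrow> 'v set" where
  "vars t = set (vars_list t)"

definition linear :: "('f, 'v) term \<Rightarrow> bool" where
  "linear t \<longleftrightarrow> distinct (vars_list t)"

fun funs :: "('f, 'v) term \<Rightarrow> 'f set" where
  "funs (Var x) = {}"
| "funs (Fun f ts) = insert f (\<Union>t \<in> set ts. funs t)"

fun root :: "('f, 'v) term \<Rightarrow> 'f option" where
  "root (Var x) = None"
| "root (Fun f ts) = Some f"

fun subst_apply :: "('f, 'v) term \<Rightarrow> ('v \<Rightarrow> ('f, 'w) term) \<Rightarrow> ('f, 'w) term"
  (infixl "\<cdot>" 67) where
  "Var x \<cdot> \<sigma> = \<sigma> x"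
| "Fun f ts \<cdot> \<sigma> = Fun f (map (\<lambda>t. t \<cdot> \<sigma>) ts)"

text \<open>Positions are lists of (0-based) argument indices.\<close>
inductive is_pos :: "nat list \<Rightarrow> ('f, 'v) term \<Rightarrow> bool" where
  "is_pos [] t"
| "i < length ts \<Longrightarrow> is_pos p (ts ! i) \<Longrightarrow> is_pos (i # p) (Fun f ts)"

definition poss :: "('f, 'v) term \<Rightarrow> nat list set" where
  "poss t = {p. is_pos p t}"

fun subt_at :: "('f, 'v) term \<Rightarrow> nat list \<Rightarrow> ('f, 'v) term" (infixl "|'_" 67) where
  "t |_ [] = t"
| "Fun f ts |_ (i # p) = (ts ! i) |_ p"
| "Var x |_ (i # p) = Var x"

fun replace_at :: "('f, 'v) term \<Rightarrow> nat list \<Rightarrow> ('f, 'v) term \<Rightarrow> ('f, 'v) term" where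
  "replace_at t [] s = s"
| "replace_at (Fun f ts) (i # p) s = Fun f (ts[i := replace_at (ts ! i) p s])"
| "replace_at (Var x) (i # p) s = Var x"

text \<open>Unifiability of two terms after renaming them apart (the terms being compared
  in the paper have pairwise disjoint, fresh variables).\<close>
definition unifiable_apart :: "('f, 'v) term \<Rightarrow> ('f, 'v) term \<Rightarrow> bool" where
  "unifiable_apart s t \<longleftrightarrow> (\<exists>(\<sigma> :: 'v \<Rightarrow> ('f, 'v) term) \<tau>. s \<cdot> \<sigma> = t \<cdot> \<tau>)"

text \<open>A rule  l \<rightarrow> r \<Leftarrow> a1 \<approx> b1, ..., ak \<approx> bk  is a triple (l, r, [(a1,b1),...,(ak,bk)]).\<close>
type_synonym ('f, 'v) crule =
  "('f, 'v) term \<times> ('f, 'v) term \<times> (('f, 'v) term \<times> ('f, 'v) term) list"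

definition lhs :: "('f, 'v) crule \<Rightarrow> ('f, 'v) term" where "lhs \<rho> = fst \<rho>"
definition rhs :: "('f, 'v) crule \<Rightarrow> ('f, 'v) term" where "rhs \<rho> = fst (snd \<rho>)"
definition conds :: "('f, 'v) crule \<Rightarrow> (('f, 'v) term \<times> ('f, 'v) term) list" where
  "conds \<rho> = snd (snd \<rho>)"

definition defined :: "('f, 'v) crule set \<Rightarrow> 'f set" where
  "defined R = {f. \<exists>\<rho> \<in> R. root (lhs \<rho>) = Some f}"

definition constructor_term :: "('f, 'v) crule set \<Rightarrow> ('f, 'v) term \<Rightarrow> bool" where
  "constructor_term R t \<longleftrightarrow> funs t \<inter> defined R = {}"

definition rules_of :: "('f, 'v) crule set \<Rightarrow> 'f \<Rightarrow> ('f, 'v) crule set" where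
  "rules_of R f = {\<rho> \<in> R. root (lhs \<rho>) = Some f}"

text \<open>The conditional rewrite relation (least fixed point = union of the approximations).\<close>
inductive cstep :: "('f, 'v) crule set \<Rightarrow> ('f, 'v) term \<Rightarrow> ('f, 'v) term \<Rightarrow> bool"
  for R where
  "\<lbrakk> p \<in> poss s; \<rho> \<in> R; s |_ p = lhs \<rho> \<cdot> \<sigma>; t = replace_at s p (rhs \<rho> \<cdot> \<sigma>);
     \<forall>i < length (conds \<rho>). (cstep R)\<^sup>*\<^sup>* (fst (conds \<rho> ! i) \<cdot> \<sigma>) (snd (conds \<rho> ! i) \<cdot> \<sigma>) \<rbrakk>
   \<Longrightarrow> cstep R s t"

definition cctrs :: "('f, 'v) crule set \<Rightarrow> bool" where
  "cctrs R \<longleftrightarrow> (\<forall>\<rho> \<in> R. \<exists>f ls r cs. \<rho> = (Fun f ls, r, cs) \<and>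
     (\<forall>l \<in> set ls. constructor_term R l) \<and>
     (\<forall>i < length cs. constructor_term R (snd (cs ! i))) \<and>
     (\<forall>i < length cs. vars (Fun f ls) \<inter> vars (snd (cs ! i)) = {}) \<and>
     (\<forall>i < length cs. \<forall>j < length cs. i \<noteq> j \<longrightarrow> vars (snd (cs ! i)) \<inter> vars (snd (cs ! j)) = {}) \<and>
     vars r \<subseteq> vars (Fun f ls) \<union> (\<Union>i < length cs. vars (snd (cs ! i))) \<and>
     (\<forall>i < length cs. vars (fst (cs ! i)) \<subseteq> vars (Fun f ls) \<union> (\<Union>j < i. vars (snd (cs ! j)))))"

definition sqsup :: "('f, 'v) crule set \<Rightarrow> ('f, 'v) term \<Rightarrow> ('f, 'v) term \<Rightarrow> bool" where
  "sqsup R s t \<longleftrightarrow> (\<exists>p \<rho> \<sigma> i. p \<in> poss s \<and> \<rho> \<in> R \<and> s |_ p = lhs \<rho> \<cdot> \<sigma> \<and>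
     i < length (conds \<rho>) \<and>
     (\<forall>j < i. (cstep R)\<^sup>*\<^sup>* (fst (conds \<rho> ! j) \<cdot> \<sigma>) (snd (conds \<rho> ! j) \<cdot> \<sigma>)) \<and>
     t = fst (conds \<rho> ! i) \<cdot> \<sigma>)"

text \<open>Labeled symbols: Con f (a constructor) or Lab f R (the symbol f_R).\<close>
datatype ('f, 'v) lsym = Con 'f | Lab 'f "('f, 'v) crule set"

type_synonym ('f, 'v) lterm = "(('f, 'v) lsym, 'v) term"

definition label :: "('f, 'v) crule set \<Rightarrow> ('f, 'w) term \<Rightarrow> (('f, 'v) lsym, 'w) term" where
  "label R t = map_term (\<lambda>f. if f \<in> defined R then Lab f (rules_of R f) else Con f) id t"

fun erase_sym :: "('f, 'v) lsym \<Rightarrow> 'f" where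
  "erase_sym (Con f) = f"
| "erase_sym (Lab f S) = f"

definition erase :: "(('f, 'v) lsym, 'w) term \<Rightarrow> ('f, 'w) term" where
  "erase t = map_term erase_sym id t"

fun in_G :: "('f, 'v) crule set \<Rightarrow> ('f, 'v) lsym \<Rightarrow> bool" where
  "in_G R (Con f) \<longleftrightarrow> f \<notin> defined R"
| "in_G R (Lab f S) \<longleftrightarrow> f \<in> defined R \<and> S \<subseteq> rules_of R f"

definition lterm_G :: "('f, 'v) crule set \<Rightarrow> ('f, 'v) lterm \<Rightarrow> bool" where
  "lterm_G R t \<longleftrightarrow> (\<forall>g \<in> funs t. in_G R g)"

fun lnf_sym :: "('f, 'v) crule set \<Rightarrow> ('f, 'v) lsym \<Rightarrow> bool" where
  "lnf_sym R (Con f) \<longleftrightarrow> f \<notin> defined R"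
| "lnf_sym R (Lab f S) \<longleftrightarrow> f \<in> defined R \<and> S = {}"

definition lnf :: "('f, 'v) crule set \<Rightarrow> ('f, 'v) lterm \<Rightarrow> bool" where
  "lnf R t \<longleftrightarrow> (\<forall>g \<in> funs t. lnf_sym R g)"

inductive lstep :: "('f, 'v) crule set \<Rightarrow> ('f, 'v) lterm \<Rightarrow> ('f, 'v) lterm \<Rightarrow> bool"
  for R where
  discard_unif:
  "\<lbrakk> p \<in> poss s; s |_ p = Fun (Lab f S) ss; \<rho> \<in> S;
     t = replace_at s p (Fun (Lab f (S - {\<rho>})) ss);
     length us = length ss; \<forall>u \<in> set us. lnf R u; linear (Fun (Lab f S) us);
     Fun (Lab f S) ss = Fun (Lab f S) us \<cdot> \<sigma>;
     \<not> unifiable_apart (Fun f (map erase us)) (lhs \<rho>) \<rbrakk>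
   \<Longrightarrow> lstep R s t"
| apply_rule:
  "\<lbrakk> p \<in> poss s; \<rho> = (Fun f ls, r, cs); \<rho> \<in> S;
     s |_ p = Fun (Lab f S) (map (\<lambda>l. label R l \<cdot> \<sigma>) ls);
     j \<le> length cs;
     \<forall>i < j. (lstep R)\<^sup>*\<^sup>* (label R (fst (cs ! i)) \<cdot> \<sigma>) (label R (snd (cs ! i)) \<cdot> \<sigma>);
     (j = length cs \<and> t = replace_at s p (label R r \<cdot> \<sigma>)) \<or>
     (j < length cs \<and>
      (\<exists>u \<tau>. lnf R u \<and> linear u \<and> (lstep R)\<^sup>*\<^sup>* (label R (fst (cs ! j)) \<cdot> \<sigma>) (u \<cdot> \<tau>) \<and>
             \<not> unifiable_apart (erase u) (snd (cs ! j))) \<and>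
      t = replace_at s p (Fun (Lab f (S - {\<rho>})) (map (\<lambda>l. label R l \<cdot> \<sigma>) ls))) \<rbrakk>
   \<Longrightarrow> lstep R s t"

definition lstep_sub :: "('f, 'v) crule set \<Rightarrow> ('f, 'v) lterm \<Rightarrow> ('f, 'v) lterm \<Rightarrow> bool" where
  "lstep_sub R s t \<longleftrightarrow> (\<exists>p f ls r cs S \<sigma> j. p \<in> poss s \<and> (Fun f ls, r, cs) \<in> S \<and>
     s |_ p = Fun (Lab f S) (map (\<lambda>l. label R l \<cdot> \<sigma>) ls) \<and> j < length cs \<and>
     (\<forall>i < j. (lstep R)\<^sup>*\<^sup>* (label R (fst (cs ! i)) \<cdot> \<sigma>) (label R (snd (cs ! i)) \<cdot> \<sigma>)) \<and>
     t = label R (fst (cs ! j)) \<cdot> \<sigma>)"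

end

theory Submission
  imports Defs
begin


lemma is_pos_Cons: "is_pos (i # p) t \<longleftrightarrow> (\<exists>f ts. t = Fun f ts \<and> i < length ts \<and> is_pos p (ts ! i))"
  by (auto elim: is_pos.cases intro: is_pos.intros)

lemma is_pos_map: "is_pos p (map_term h g t) = is_pos p t"
proof (induction p arbitrary: t)
  case Nil then show ?case by (simp add: is_pos.intros)
next
  case (Cons i p) then show ?case by (cases t) (auto simp: is_pos_Cons)
qed

lemma subt_map: "is_pos p t \<Longrightarrow> map_term h g (t |_ p) = map_term h g t |_ p"
  by (induction p arbitrary: t) (auto simp: is_pos_Cons)

lemma replace_map: "is_pos p t \<Longrightarrow> map_term h g (replace_at t p s) = replace_at (map_term h g t) p (map_term h g s)"
  by (induction p arbitrary: t) (auto simp: is_pos_Cons map_update)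

lemma replace_subt: "is_pos p t \<Longrightarrow> replace_at t p (t |_ p) = t"
  by (induction p arbitrary: t) (auto simp: is_pos_Cons)

lemma funs_replace: "funs (replace_at t p s) \<subseteq> funs t \<union> funs s"
proof (induction p arbitrary: t)
  case Nil then show ?case by simp
next
  case (Cons i p)
  show ?case
  proof (cases t)
    case (Var x) then show ?thesis by simp
  next
    case (Fun f ts)
    show ?thesis
    proof (cases "i < length ts")
      case True
      have "set (ts[i := replace_at (ts ! i) p s]) \<subseteq> insert (replace_at (ts ! i) p s) (set ts)"
        by (rule set_update_subset_insert)
      moreover have "funs (ts ! i) \<subseteq> funs t" using True Fun by auto
      ultimately show ?thesis using Fun Cons.IH[of "ts ! i"] by fastforce
    next
      case False then show ?thesis using Fun by (auto simp: list_update_beyond)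
    qed
  qed
qed

lemma funs_subt: "is_pos p t \<Longrightarrow> funs (t |_ p) \<subseteq> funs t"
  by (induction p arbitrary: t) (fastforce simp: is_pos_Cons)+

lemma vars_Fun: "vars (Fun f ts) = (\<Union>t\<in>set ts. vars t)"
  by (simp add: vars_def)
lemma vars_Var: "vars (Var x) = {x}"
  by (simp add: vars_def)

lemma funs_subst: "funs (t \<cdot> \<sigma>) = funs t \<union> (\<Union>x\<in>vars t. funs (\<sigma> x))"
  by (induction t) (auto simp: vars_Fun vars_Var)

lemma map_subst: "map_term h id (t \<cdot> \<sigma>) = map_term h id t \<cdot> (\<lambda>x. map_term h id (\<sigma> x))"
  by (induction t) auto

lemma vars_map: "vars (map_term h id t) = vars t"
  by (induction t) (auto simp: vars_Fun vars_Var)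

lemma funs_map: "funs (map_term h g t) = h ` funs t"
  by (induction t) auto

lemma erase_label: "erase (label R t) = t"
proof -
    have "map_term (\<lambda>x. erase_sym (if x \<in> defined R then Lab x (rules_of R x) else Con x)) (\<lambda>x. x) t = t"
      by (induction t) (auto simp: map_idI)
    then show ?thesis by (simp add: erase_def label_def term.map_comp o_def)
  qed




lemma label_subst: "label R (t \<cdot> \<sigma>) = label R t \<cdot> (\<lambda>x. label R (\<sigma> x))"
  unfolding label_def by (rule map_subst)

lemma erase_subst: "erase (t \<cdot> \<sigma>) = erase t \<cdot> (\<lambda>x. erase (\<sigma> x))"
  unfolding erase_def by (rule map_subst)

lemma label_Fun: "f \<in> defined R \<Longrightarrow> label R (Fun f ts) = Fun (Lab f (rules_of R f)) (map (label R) ts)"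
  unfolding label_def by simp

lemma cctrs_shape:
  assumes "cctrs R" "\<rho> \<in> R" shows "\<exists>f ls r cs. \<rho> = (Fun f ls, r, cs)"
proof -
  have "\<exists>f ls r cs. \<rho> = (Fun f ls, r, cs) \<and> True"
    using bspec[OF assms(1)[unfolded cctrs_def] assms(2)] by (elim exE conjE) (intro exI conjI, assumption, rule TrueI)
  then show ?thesis by simp
qed

lemma cctrs_rule:
  assumes "cctrs R" "(Fun f ls, r, cs) \<in> R"
  shows "(\<forall>i<length cs. vars (fst (cs ! i)) \<subseteq> vars (Fun f ls) \<union> (\<Union>j<i. vars (snd (cs ! j))))
    \<and> vars r \<subseteq> vars (Fun f ls) \<union> (\<Union>i<length cs. vars (snd (cs ! i)))"
proof -
  from bspec[OF assms(1)[unfolded cctrs_def] assms(2)]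
  obtain f' ls' r' cs' where eq: "(Fun f ls, r, cs) = (Fun f' ls', r', cs')"
    and A: "vars r' \<subseteq> vars (Fun f' ls') \<union> (\<Union>i < length cs'. vars (snd (cs' ! i)))"
    and B: "\<forall>i < length cs'. vars (fst (cs' ! i)) \<subseteq> vars (Fun f' ls') \<union> (\<Union>j < i. vars (snd (cs' ! j)))"
    by (elim exE conjE) blast
  from eq have "f = f'" "ls = ls'" "r = r'" "cs = cs'" by auto
  with A B show ?thesis by simp
qed

lemma rtranclp_label:
  assumes "r\<^sup>*\<^sup>* x y" "\<And>a b. r a b \<Longrightarrow> lstep R (label R a) (label R b)"
  shows "(lstep R)\<^sup>*\<^sup>* (label R x) (label R y)"
  using assms(1)
proof (induction rule: rtranclp_induct)
  case base then show ?case by simp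
next
  case (step y z) then show ?case using assms(2)[of y z] by (meson rtranclp.rtrancl_into_rtrancl)
qed

lemma cstep_lstep:
  assumes "cctrs R"
  shows "cstep R s t \<Longrightarrow> lstep R (label R s) (label R t)"
proof (induction rule: cstep.induct)
  case (1 p s \<rho> \<sigma> t)
  obtain f ls r cs where \<rho>: "\<rho> = (Fun f ls, r, cs)" using cctrs_shape[OF assms 1(2)] by blast
  have fdef: "f \<in> defined R" using 1(2) \<rho> unfolding defined_def lhs_def by force
  have rin: "\<rho> \<in> rules_of R f" using 1(2) \<rho> unfolding rules_of_def lhs_def by simp
  define \<sigma>' where "\<sigma>' = (\<lambda>x. label R (\<sigma> x))"
  have conds: "\<forall>i < length cs. (lstep R)\<^sup>*\<^sup>* (label R (fst (cs ! i)) \<cdot> \<sigma>') (label R (snd (cs ! i)) \<cdot> \<sigma>')"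
  proof (intro allI impI)
    fix i assume "i < length cs"
    then have "(\<lambda>x1 x2. cstep R x1 x2 \<and> lstep R (label R x1) (label R x2))\<^sup>*\<^sup>* (fst (cs ! i) \<cdot> \<sigma>) (snd (cs ! i) \<cdot> \<sigma>)"
      using 1(5) \<rho> by (simp add: conds_def)
    from rtranclp_label[OF this] show "(lstep R)\<^sup>*\<^sup>* (label R (fst (cs ! i)) \<cdot> \<sigma>') (label R (snd (cs ! i)) \<cdot> \<sigma>')"
      by (simp add: label_subst \<sigma>'_def)
  qed
  have pos: "p \<in> poss (label R s)" using 1(1) by (simp add: poss_def label_def is_pos_map)
  have sub: "label R s |_ p = Fun (Lab f (rules_of R f)) (map (\<lambda>l. label R l \<cdot> \<sigma>') ls)"
  proof -
    have "label R s |_ p = label R (s |_ p)" using 1(1) by (simp add: poss_def label_def subt_map)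
    also have "\<dots> = label R (Fun f ls \<cdot> \<sigma>)" using 1(3) \<rho> by (simp add: lhs_def)
    finally show ?thesis using fdef by (simp add: label_Fun label_subst \<sigma>'_def)
  qed
  have tt: "label R t = replace_at (label R s) p (label R r \<cdot> \<sigma>')"
  proof -
    have "label R t = replace_at (label R s) p (label R (r \<cdot> \<sigma>))"
      using 1(1,4) \<rho> unfolding label_def by (simp add: poss_def replace_map rhs_def)
    then show ?thesis by (simp only: label_subst \<sigma>'_def)
  qed
  have dis: "(length cs = length cs \<and> label R t = replace_at (label R s) p (label R r \<cdot> \<sigma>')) \<or> X" for X
    using tt by blast
  note rl = lstep.apply_rule[where p=p and s="label R s" and \<rho>=\<rho> and f=f and ls=ls and r=r and cs=cs
        and S="rules_of R f" and \<sigma>=\<sigma>' and j="length cs" and t="label R t", OF pos \<rho> rin sub]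
  show ?case by (rule rl[OF order.refl conds dis])
qed




definition lab_ok :: "('f, 'v) crule set \<Rightarrow> (('f, 'v) lsym, 'w) term \<Rightarrow> bool" where
  "lab_ok R u \<longleftrightarrow> (\<forall>f S. Lab f S \<in> funs u \<longrightarrow> S \<subseteq> R)"

lemma lab_ok_subst: "lab_ok R (t \<cdot> \<sigma>) \<longleftrightarrow> lab_ok R t \<and> (\<forall>x\<in>vars t. lab_ok R (\<sigma> x))"
proof
  assume h: "lab_ok R (t \<cdot> \<sigma>)"
  show "lab_ok R t \<and> (\<forall>x\<in>vars t. lab_ok R (\<sigma> x))"
    using h unfolding lab_ok_def funs_subst by (meson UN_I UnI1 UnI2)
next
  assume h: "lab_ok R t \<and> (\<forall>x\<in>vars t. lab_ok R (\<sigma> x))"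
  show "lab_ok R (t \<cdot> \<sigma>)"
    using h unfolding lab_ok_def funs_subst by (metis UN_E Un_iff)
qed

lemma lab_ok_label: "lab_ok R (label R l)"
  unfolding lab_ok_def label_def funs_map by (auto simp: rules_of_def split: if_splits)

lemma vars_label: "vars (label R l) = vars l"
  unfolding label_def by (rule vars_map)

lemma lab_ok_label_subst: "lab_ok R (label R l \<cdot> \<sigma>) \<longleftrightarrow> (\<forall>x\<in>vars l. lab_ok R (\<sigma> x))"
  by (simp add: lab_ok_subst lab_ok_label vars_label)

lemma lab_ok_subt: "is_pos p u \<Longrightarrow> lab_ok R u \<Longrightarrow> lab_ok R (u |_ p)"
  unfolding lab_ok_def using funs_subt[of p u] by (meson subsetD)

lemma lab_ok_replace: "lab_ok R u \<Longrightarrow> lab_ok R w \<Longrightarrow> lab_ok R (replace_at u p w)"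
  unfolding lab_ok_def using funs_replace[of u p w] by (meson Un_iff subsetD)

lemma lab_ok_Fun: "lab_ok R (Fun g ts) \<Longrightarrow> t \<in> set ts \<Longrightarrow> lab_ok R t"
  unfolding lab_ok_def by auto

lemma lab_ok_root: "lab_ok R (Fun (Lab f S) ts) \<Longrightarrow> S \<subseteq> R"
  unfolding lab_ok_def by auto

lemma erase_subt: "is_pos p u \<Longrightarrow> erase (u |_ p) = erase u |_ p"
  unfolding erase_def by (rule subt_map)

lemma erase_replace: "is_pos p u \<Longrightarrow> erase (replace_at u p w) = replace_at (erase u) p (erase w)"
  unfolding erase_def by (rule replace_map)

lemma erase_is_pos: "is_pos p (erase u) = is_pos p u"
  unfolding erase_def by (rule is_pos_map)

lemma erase_label_subst: "erase (label R l \<cdot> \<sigma>) = l \<cdot> (\<lambda>x. erase (\<sigma> x))"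
  by (simp add: erase_subst erase_label)

lemma relabel_step:
  assumes "is_pos p u" "u |_ p = Fun (Lab f S) ss" "S' \<subseteq> S" "lab_ok R u"
  shows "lab_ok R (replace_at u p (Fun (Lab f S') ss)) \<and> erase (replace_at u p (Fun (Lab f S') ss)) = erase u"
proof
  have ok: "lab_ok R (Fun (Lab f S) ss)" using lab_ok_subt[OF assms(1,4)] assms(2) by simp
  then have "lab_ok R (Fun (Lab f S') ss)" using assms(3) unfolding lab_ok_def by (simp, blast)
  then show "lab_ok R (replace_at u p (Fun (Lab f S') ss))" using lab_ok_replace[OF assms(4)] by blast
  have "erase (Fun (Lab f S') ss) = erase (u |_ p)" using assms(2) by (simp add: erase_def)
  also have "\<dots> = erase u |_ p" by (rule erase_subt[OF assms(1)])
  finally have e: "erase (Fun (Lab f S') ss) = erase u |_ p" .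
  have "erase (replace_at u p (Fun (Lab f S') ss)) = replace_at (erase u) p (erase (Fun (Lab f S') ss))"
    by (rule erase_replace[OF assms(1)])
  also have "\<dots> = replace_at (erase u) p (erase u |_ p)" by (simp only: e)
  also have "\<dots> = erase u" by (rule replace_subt) (simp only: erase_is_pos assms(1))
  finally show "erase (replace_at u p (Fun (Lab f S') ss)) = erase u" .
qed

lemma chain:
  assumes "cctrs R" "(Fun f ls, r, cs) \<in> R" "\<forall>x\<in>vars (Fun f ls). lab_ok R (\<sigma> x)" "j \<le> length cs"
    "\<forall>i<j. lab_ok R (label R (fst (cs ! i)) \<cdot> \<sigma>) \<longrightarrow> lab_ok R (label R (snd (cs ! i)) \<cdot> \<sigma>)
          \<and> (cstep R)\<^sup>*\<^sup>* (erase (label R (fst (cs ! i)) \<cdot> \<sigma>)) (erase (label R (snd (cs ! i)) \<cdot> \<sigma>))"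
  shows "(\<forall>i<j. (cstep R)\<^sup>*\<^sup>* (fst (cs ! i) \<cdot> (\<lambda>x. erase (\<sigma> x))) (snd (cs ! i) \<cdot> (\<lambda>x. erase (\<sigma> x))))
     \<and> (\<forall>x \<in> vars (Fun f ls) \<union> (\<Union>i<j. vars (snd (cs ! i))). lab_ok R (\<sigma> x))"
  using assms(4,5)
proof (induction j)
  case 0 then show ?case using assms(3) by simp
next
  case (Suc j)
  then have IH: "(\<forall>i<j. (cstep R)\<^sup>*\<^sup>* (fst (cs ! i) \<cdot> (\<lambda>x. erase (\<sigma> x))) (snd (cs ! i) \<cdot> (\<lambda>x. erase (\<sigma> x))))
     \<and> (\<forall>x \<in> vars (Fun f ls) \<union> (\<Union>i<j. vars (snd (cs ! i))). lab_ok R (\<sigma> x))" by simp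
  have jl: "j < length cs" using Suc.prems by simp
  have "vars (fst (cs ! j)) \<subseteq> vars (Fun f ls) \<union> (\<Union>i<j. vars (snd (cs ! i)))"
    using cctrs_rule[OF assms(1,2)] jl by blast
  then have "lab_ok R (label R (fst (cs ! j)) \<cdot> \<sigma>)" using IH by (auto simp: lab_ok_label_subst)
  then have h: "lab_ok R (label R (snd (cs ! j)) \<cdot> \<sigma>)
      \<and> (cstep R)\<^sup>*\<^sup>* (fst (cs ! j) \<cdot> (\<lambda>x. erase (\<sigma> x))) (snd (cs ! j) \<cdot> (\<lambda>x. erase (\<sigma> x)))"
    using Suc.prems(2) by (simp add: erase_label_subst)
  have 1: "\<forall>i<Suc j. (cstep R)\<^sup>*\<^sup>* (fst (cs ! i) \<cdot> (\<lambda>x. erase (\<sigma> x))) (snd (cs ! i) \<cdot> (\<lambda>x. erase (\<sigma> x)))"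
    using IH h less_Suc_eq by auto
  have 2: "\<forall>x \<in> vars (snd (cs ! j)). lab_ok R (\<sigma> x)" using h by (simp add: lab_ok_label_subst)
  have "vars (Fun f ls) \<union> (\<Union>i<Suc j. vars (snd (cs ! i))) = vars (Fun f ls) \<union> (\<Union>i<j. vars (snd (cs ! i))) \<union> vars (snd (cs ! j))"
    by (auto simp: lessThan_Suc)
  then show ?case using 1 2 IH by auto
qed


lemma rt_lift:
  assumes "(\<lambda>a b. lstep R a b \<and> (lab_ok R a \<longrightarrow> lab_ok R b \<and> (cstep R)\<^sup>*\<^sup>* (erase a) (erase b)))\<^sup>*\<^sup>* x y"
    "lab_ok R x"
  shows "lab_ok R y \<and> (cstep R)\<^sup>*\<^sup>* (erase x) (erase y)"
  using assms(1)
proof (induction rule: rtranclp_induct)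
  case base then show ?case using assms(2) by simp
next
  case (step y z)
  then have "lab_ok R z \<and> (cstep R)\<^sup>*\<^sup>* (erase y) (erase z)" by blast
  with step.IH show ?case using rtranclp_trans by metis
qed

lemma erase_Fun: "erase (Fun g ts) = Fun (erase_sym g) (map erase ts)"
  unfolding erase_def by simp

lemma lstep_erase:
  assumes "cctrs R"
  shows "lstep R u v \<Longrightarrow> lab_ok R u \<longrightarrow> lab_ok R v \<and> (cstep R)\<^sup>*\<^sup>* (erase u) (erase v)"
proof (induction rule: lstep.induct)
  case (discard_unif p s f S ss \<rho> t us \<sigma>)
  show ?case
  proof
    assume ok: "lab_ok R s"
    have ps: "is_pos p s" using discard_unif(1) by (simp add: poss_def)
    have "lab_ok R t \<and> erase t = erase s"
      using relabel_step[OF ps discard_unif(2) _ ok, of "S - {\<rho>}"] discard_unif(4) by blast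
    then show "lab_ok R t \<and> (cstep R)\<^sup>*\<^sup>* (erase s) (erase t)" by simp
  qed
next
  case (apply_rule p s \<rho> f ls r cs S \<sigma> j t)
  show ?case
  proof
    assume ok: "lab_ok R s"
    have ps: "is_pos p s" using apply_rule(1) by (simp add: poss_def)
    have okp: "lab_ok R (Fun (Lab f S) (map (\<lambda>l. label R l \<cdot> \<sigma>) ls))"
      using lab_ok_subt[OF ps ok] apply_rule(4) by simp
    have SR: "S \<subseteq> R" by (rule lab_ok_root[OF okp])
    have \<rho>R: "(Fun f ls, r, cs) \<in> R" using SR apply_rule(2,3) by blast
    have vok: "\<forall>x\<in>vars (Fun f ls). lab_ok R (\<sigma> x)"
    proof
      fix x assume "x \<in> vars (Fun f ls)"
      then obtain l where l: "l \<in> set ls" "x \<in> vars l" by (auto simp: vars_Fun)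
      have "lab_ok R (label R l \<cdot> \<sigma>)" by (rule lab_ok_Fun[OF okp]) (use l in simp)
      then show "lab_ok R (\<sigma> x)" using l(2) by (simp add: lab_ok_label_subst)
    qed
    have conds: "\<forall>i<j. lab_ok R (label R (fst (cs ! i)) \<cdot> \<sigma>) \<longrightarrow> lab_ok R (label R (snd (cs ! i)) \<cdot> \<sigma>)
          \<and> (cstep R)\<^sup>*\<^sup>* (erase (label R (fst (cs ! i)) \<cdot> \<sigma>)) (erase (label R (snd (cs ! i)) \<cdot> \<sigma>))"
      using apply_rule(6) rt_lift by blast
    have C: "(\<forall>i<j. (cstep R)\<^sup>*\<^sup>* (fst (cs ! i) \<cdot> (\<lambda>x. erase (\<sigma> x))) (snd (cs ! i) \<cdot> (\<lambda>x. erase (\<sigma> x))))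
     \<and> (\<forall>x \<in> vars (Fun f ls) \<union> (\<Union>i<j. vars (snd (cs ! i))). lab_ok R (\<sigma> x))"
      by (rule chain[OF assms \<rho>R vok apply_rule(5) conds])
    show "lab_ok R t \<and> (cstep R)\<^sup>*\<^sup>* (erase s) (erase t)"
    proof (cases "j = length cs")
      case True
      then have tdef: "t = replace_at s p (label R r \<cdot> \<sigma>)" using apply_rule(7) by simp
      have "vars r \<subseteq> vars (Fun f ls) \<union> (\<Union>i<length cs. vars (snd (cs ! i)))"
        using cctrs_rule[OF assms \<rho>R] by blast
      then have "lab_ok R (label R r \<cdot> \<sigma>)" using C True by (auto simp: lab_ok_label_subst)
      then have okt: "lab_ok R t" using lab_ok_replace[OF ok] tdef by blast
      define \<sigma>e where "\<sigma>e = (\<lambda>x. erase (\<sigma> x))"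
      have pe: "p \<in> poss (erase s)" using ps by (simp add: poss_def erase_is_pos)
      have "erase s |_ p = erase (s |_ p)" by (rule erase_subt[OF ps, symmetric])
      also have "\<dots> = Fun f (map (\<lambda>l. l \<cdot> \<sigma>e) ls)"
        using apply_rule(4) by (simp add: erase_Fun erase_label_subst \<sigma>e_def)
      finally have sub: "erase s |_ p = lhs \<rho> \<cdot> \<sigma>e" using apply_rule(2) by (simp add: lhs_def)
      have te: "erase t = replace_at (erase s) p (rhs \<rho> \<cdot> \<sigma>e)"
        using tdef erase_replace[OF ps] apply_rule(2) by (simp add: erase_label_subst rhs_def \<sigma>e_def)
      have cs: "\<forall>i < length (conds \<rho>). (cstep R)\<^sup>*\<^sup>* (fst (conds \<rho> ! i) \<cdot> \<sigma>e) (snd (conds \<rho> ! i) \<cdot> \<sigma>e)"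
        using C True apply_rule(2) by (simp add: conds_def \<sigma>e_def)
      have "cstep R (erase s) (erase t)"
        by (rule cstep.intros[OF pe _ sub te cs]) (use \<rho>R apply_rule(2) in simp)
      then show ?thesis using okt by simp
    next
      case False
      then have tdef: "t = replace_at s p (Fun (Lab f (S - {\<rho>})) (map (\<lambda>l. label R l \<cdot> \<sigma>) ls))"
        using apply_rule(7) by simp
      have "lab_ok R t \<and> erase t = erase s"
        using relabel_step[OF ps apply_rule(4) _ ok, of "S - {\<rho>}"] tdef by blast
      then show ?thesis by simp
    qed
  qed
qed


lemma vok_lemma:
  assumes okp: "lab_ok R (Fun g (map (\<lambda>l. label R l \<cdot> \<sigma>) ls))"
  shows "\<forall>x\<in>vars (Fun f ls). lab_ok R (\<sigma> x)"
proof
  fix x assume "x \<in> vars (Fun f ls)"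
  then obtain l where l: "l \<in> set ls" "x \<in> vars l" by (auto simp: vars_Fun)
  have "lab_ok R (label R l \<cdot> \<sigma>)" by (rule lab_ok_Fun[OF okp]) (use l in simp)
  then show "lab_ok R (\<sigma> x)" using l(2) by (simp add: lab_ok_label_subst)
qed

lemma G_lab_ok: "lterm_G R s \<Longrightarrow> lab_ok R s"
  unfolding lab_ok_def
proof (intro allI impI)
  fix f S assume "lterm_G R s" "Lab f S \<in> funs s"
  then have "S \<subseteq> rules_of R f" unfolding lterm_G_def by fastforce
  moreover have "rules_of R f \<subseteq> R" unfolding rules_of_def by blast
  ultimately show "S \<subseteq> R" by (rule order.trans)
qed

lemma part1:
  assumes "cctrs R" "sqsup R s t"
  shows "lstep_sub R (label R s) (label R t)"
proof -
  from assms(2) obtain p \<rho> \<sigma> i where h: "p \<in> poss s" "\<rho> \<in> R" "s |_ p = lhs \<rho> \<cdot> \<sigma>"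
     "i < length (conds \<rho>)"
     "\<forall>j < i. (cstep R)\<^sup>*\<^sup>* (fst (conds \<rho> ! j) \<cdot> \<sigma>) (snd (conds \<rho> ! j) \<cdot> \<sigma>)"
     "t = fst (conds \<rho> ! i) \<cdot> \<sigma>"
    unfolding sqsup_def by blast
  obtain f ls r cs where \<rho>: "\<rho> = (Fun f ls, r, cs)" using cctrs_shape[OF assms(1) h(2)] by blast
  have fdef: "f \<in> defined R" using h(2) \<rho> unfolding defined_def lhs_def by force
  have rin: "(Fun f ls, r, cs) \<in> rules_of R f" using h(2) \<rho> unfolding rules_of_def lhs_def by simp
  define \<sigma>' where "\<sigma>' = (\<lambda>x. label R (\<sigma> x))"
  have conds: "\<forall>j < i. (lstep R)\<^sup>*\<^sup>* (label R (fst (cs ! j)) \<cdot> \<sigma>') (label R (snd (cs ! j)) \<cdot> \<sigma>')"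
  proof (intro allI impI)
    fix j assume "j < i"
    then have "(cstep R)\<^sup>*\<^sup>* (fst (cs ! j) \<cdot> \<sigma>) (snd (cs ! j) \<cdot> \<sigma>)"
      using h(5) \<rho> by (simp add: conds_def)
    from rtranclp_label[OF this cstep_lstep[OF assms(1)]]
    show "(lstep R)\<^sup>*\<^sup>* (label R (fst (cs ! j)) \<cdot> \<sigma>') (label R (snd (cs ! j)) \<cdot> \<sigma>')"
      by (simp add: label_subst \<sigma>'_def)
  qed
  have pos: "p \<in> poss (label R s)" using h(1) by (simp add: poss_def label_def is_pos_map)
  have sub: "label R s |_ p = Fun (Lab f (rules_of R f)) (map (\<lambda>l. label R l \<cdot> \<sigma>') ls)"
  proof -
    have "label R s |_ p = label R (s |_ p)" using h(1) by (simp add: poss_def label_def subt_map)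
    also have "\<dots> = label R (Fun f ls \<cdot> \<sigma>)" using h(3) \<rho> by (simp add: lhs_def)
    finally show ?thesis using fdef by (simp add: label_Fun label_subst \<sigma>'_def)
  qed
  have il: "i < length cs" using h(4) \<rho> by (simp add: conds_def)
  have tt: "label R t = label R (fst (cs ! i)) \<cdot> \<sigma>'"
    using h(6) \<rho> by (simp add: conds_def label_subst \<sigma>'_def)
  show ?thesis unfolding lstep_sub_def
    by (intro exI[of _ p] exI[of _ f] exI[of _ ls] exI[of _ r] exI[of _ cs] exI[of _ "rules_of R f"]
        exI[of _ \<sigma>'] exI[of _ i] conjI pos rin sub il conds tt)
qed

lemma part2:
  assumes "cctrs R" "lterm_G R s" "lstep_sub R s t"
  shows "sqsup R (erase s) (erase t)"
proof -
  have ok: "lab_ok R s" by (rule G_lab_ok[OF assms(2)])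
  from assms(3) obtain p f ls r cs S \<sigma> j where h: "p \<in> poss s" "(Fun f ls, r, cs) \<in> S"
     "s |_ p = Fun (Lab f S) (map (\<lambda>l. label R l \<cdot> \<sigma>) ls)" "j < length cs"
     "\<forall>i < j. (lstep R)\<^sup>*\<^sup>* (label R (fst (cs ! i)) \<cdot> \<sigma>) (label R (snd (cs ! i)) \<cdot> \<sigma>)"
     "t = label R (fst (cs ! j)) \<cdot> \<sigma>"
    unfolding lstep_sub_def by blast
  have ps: "is_pos p s" using h(1) by (simp add: poss_def)
  have okp: "lab_ok R (Fun (Lab f S) (map (\<lambda>l. label R l \<cdot> \<sigma>) ls))"
    using lab_ok_subt[OF ps ok] h(3) by simp
  have SR: "S \<subseteq> R" by (rule lab_ok_root[OF okp])
  have \<rho>R: "(Fun f ls, r, cs) \<in> R" using SR h(2) by blast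
  have vok: "\<forall>x\<in>vars (Fun f ls). lab_ok R (\<sigma> x)" by (rule vok_lemma[OF okp])
  have ms: "(lstep R)\<^sup>*\<^sup>* a b \<Longrightarrow>
     (\<lambda>a b. lstep R a b \<and> (lab_ok R a \<longrightarrow> lab_ok R b \<and> (cstep R)\<^sup>*\<^sup>* (erase a) (erase b)))\<^sup>*\<^sup>* a b" for a b
  proof (induction rule: rtranclp_induct)
    case base then show ?case by simp
  next
    case (step y z)
    have st: "(\<lambda>a b. lstep R a b \<and> (lab_ok R a \<longrightarrow> lab_ok R b \<and> (cstep R)\<^sup>*\<^sup>* (erase a) (erase b))) y z"
      using step.hyps(2) lstep_erase[OF assms(1) step.hyps(2)] by blast
    show ?case by (rule rtranclp.rtrancl_into_rtrancl[OF step.IH st])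
  qed
  have conds: "\<forall>i<j. lab_ok R (label R (fst (cs ! i)) \<cdot> \<sigma>) \<longrightarrow> lab_ok R (label R (snd (cs ! i)) \<cdot> \<sigma>)
        \<and> (cstep R)\<^sup>*\<^sup>* (erase (label R (fst (cs ! i)) \<cdot> \<sigma>)) (erase (label R (snd (cs ! i)) \<cdot> \<sigma>))"
    using h(5) ms rt_lift by blast
  have C: "(\<forall>i<j. (cstep R)\<^sup>*\<^sup>* (fst (cs ! i) \<cdot> (\<lambda>x. erase (\<sigma> x))) (snd (cs ! i) \<cdot> (\<lambda>x. erase (\<sigma> x))))"
    using chain[OF assms(1) \<rho>R vok _ conds] h(4) by simp
  define \<sigma>e where "\<sigma>e = (\<lambda>x. erase (\<sigma> x))"
  have pe: "p \<in> poss (erase s)" using ps by (simp add: poss_def erase_is_pos)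
  have "erase s |_ p = erase (s |_ p)" by (rule erase_subt[OF ps, symmetric])
  also have "\<dots> = Fun f (map (\<lambda>l. l \<cdot> \<sigma>e) ls)"
    using h(3) by (simp add: erase_Fun erase_label_subst \<sigma>e_def)
  finally have sub: "erase s |_ p = lhs (Fun f ls, r, cs) \<cdot> \<sigma>e" by (simp add: lhs_def)
  have jl: "j < length (conds (Fun f ls, r, cs))" using h(4) by (simp add: conds_def)
  have cs: "\<forall>i < j. (cstep R)\<^sup>*\<^sup>* (fst (conds (Fun f ls, r, cs) ! i) \<cdot> \<sigma>e) (snd (conds (Fun f ls, r, cs) ! i) \<cdot> \<sigma>e)"
    using C by (simp add: conds_def \<sigma>e_def)
  have te: "erase t = fst (conds (Fun f ls, r, cs) ! j) \<cdot> \<sigma>e"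
    using h(6) by (simp add: erase_label_subst conds_def \<sigma>e_def)
  show ?thesis unfolding sqsup_def
    by (intro exI[of _ p] exI[of _ "(Fun f ls, r, cs)"] exI[of _ \<sigma>e] exI[of _ j] conjI pe \<rho>R sub jl cs te)
qed

theorem lemma4:
  fixes R :: "('f, 'v) crule set"
  assumes "infinite (UNIV :: 'v set)"
    and "cctrs R"
  shows "(\<forall>s t :: ('f, 'v) term. sqsup R s t \<longrightarrow> lstep_sub R (label R s) (label R t))
       \<and> (\<forall>s t :: ('f, 'v) lterm. lterm_G R s \<longrightarrow> lterm_G R t \<longrightarrow> lstep_sub R s t
            \<longrightarrow> sqsup R (erase s) (erase t))"
  using part1[OF assms(2)] part2[OF assms(2)] by blast

end
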